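(* There is an absolute constant $\beta>0$ such that the following holds. Let $X\subset\mathbb{R}^d$ be a finite data set with $|X|=n$, let $\varepsilon\in(0,1)$, and let $C=\{c_1,\dots,c_m\}\subset\mathbb{R}^d$ be a finite nonempty set of projection centers. For each $i$, let $N_i$ be an $\varepsilon$-net of the unit sphere centered at $c_i$, and for $u\in N_i$ let $l_{iu}$ be the line through $c_i$ and $u$; let $\mathcal{L}:=\{l_{iu}: i\in\{1,\dots,m\},u\in N_i\}$. Let $X'$ be the multiset obtained by replacing each $x\in X$ by its orthogonal projection onto a nearest line of $\mathcal{L}$. Then for every finite nonempty $C'\subset\mathbb{R}^d$ and every $p\in\{1,\dots,n\}$, $$|\mathrm{cost}_p(X', C') - \mathrm{cost}_p(X, C')| \leq \beta\,\varepsilon \cdot \mathrm{cost}_p(X, C).$$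
   Context: Distances are Euclidean and $d(x,C):=\min_{c\in C}d(x,c)$. For a finite multiset $Y$ and finite nonempty $C$, $\mathrm{cost}_p(Y,C)$ is the sum of the $p$ largest values of $d(y,C)$, $y\in Y$, counted with multiplicity. *)

theory Defs
  imports Complex_Main "HOL-Library.Multiset"
begin

text \<open>Points of R^d are represented as functions nat => real vanishing outside {..<d},
  so that the dimension d can be quantified inside the statement (the constant beta
  must not depend on d).\<close>

type_synonym pt = "nat \<Rightarrow> real"

definition Rd :: "nat \<Rightarrow> pt set" where
  "Rd d = {x. \<forall>i\<ge>d. x i = 0}"

definition edist :: "nat \<Rightarrow> pt \<Rightarrow> pt \<Rightarrow> real" where
  "edist d x y = sqrt (\<Sum>i<d. (x i - y i)^2)"

definition setdist :: "nat \<Rightarrow> pt \<Rightarrow> pt set \<Rightarrow> real" where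
  "setdist d x C = Min (edist d x ` C)"

definition costp :: "nat \<Rightarrow> nat \<Rightarrow> pt multiset \<Rightarrow> pt set \<Rightarrow> real" where
  "costp d p Y C = sum_list (take p (rev (sorted_list_of_multiset (image_mset (\<lambda>y. setdist d y C) Y))))"

text \<open>A line through c and u is represented by the pair (c,u); its points are c + t(u-c).\<close>

definition proj_line :: "nat \<Rightarrow> pt \<times> pt \<Rightarrow> pt \<Rightarrow> pt" where
  "proj_line d l x = (let c = fst l; u = snd l;
      t = (\<Sum>i<d. (x i - c i) * (u i - c i)) / (\<Sum>i<d. (u i - c i)^2)
    in (\<lambda>i. c i + t * (u i - c i)))"

definition line_dist :: "nat \<Rightarrow> pt \<Rightarrow> pt \<times> pt \<Rightarrow> real" where
  "line_dist d x l = edist d x (proj_line d l x)"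

definition is_sphere_net :: "nat \<Rightarrow> real \<Rightarrow> pt \<Rightarrow> pt set \<Rightarrow> bool" where
  "is_sphere_net d \<epsilon> c N \<longleftrightarrow> finite N \<and> N \<subseteq> {u \<in> Rd d. edist d u c = 1} \<and>
     (\<forall>y \<in> Rd d. edist d y c = 1 \<longrightarrow> (\<exists>u\<in>N. edist d y u \<le> \<epsilon>))"

end

theory Submission
  imports Defs "HOL-Analysis.L2_Norm"
begin


lemma topp_char:
  fixes f :: "'a \<Rightarrow> real"
  assumes X: "finite X" and p: "p \<le> card X"
  defines "T \<equiv> sum_list (take p (rev (sorted_list_of_multiset (image_mset f (mset_set X)))))"
  shows "(\<exists>S\<subseteq>X. card S = p \<and> T = sum f S) \<and> (\<forall>S\<subseteq>X. card S = p \<longrightarrow> sum f S \<le> T)"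
proof -
  obtain L where dL: "distinct L" "set L = X" using finite_distinct_list[OF X] by blast
  define ys where "ys = sort_key f L"
  define n where "n = card X"
  have dys: "distinct ys" "set ys = X" using dL by (auto simp: ys_def)
  have len: "length ys = n" using dys distinct_card n_def by fastforce
  have ms: "mset ys = mset_set X" using dys mset_set_set by metis
  have srt: "sorted (map f ys)" by (simp add: ys_def)
  have "sorted_list_of_multiset (image_mset f (mset_set X)) = map f ys"
    using srt ms[symmetric] by (simp add: sorted_sort_id flip: mset_map)
  hence "T = sum_list (rev (drop (n - p) (map f ys)))"
    by (simp add: T_def take_rev len)
  also have "\<dots> = sum_list (map f (drop (n - p) ys))" by (simp add: drop_map)
  also have "\<dots> = sum f (set (drop (n - p) ys))"
    using dys by (simp add: sum_list_distinct_conv_sum_set)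
  finally have Teq: "T = sum f (set (drop (n - p) ys))" .
  define A where "A = set (drop (n - p) ys)"
  define B where "B = set (take (n - p) ys)"
  have cA: "card A = p" using dys len p n_def by (simp add: A_def distinct_card)
  have AX: "A \<subseteq> X" using dys by (auto simp: A_def dest: in_set_dropD)
  have ABX: "X = A \<union> B" unfolding A_def B_def dys(2)[symmetric]
    by (metis Un_commute append_take_drop_id set_append)
  have ABd: "A \<inter> B = {}" using dys(1) unfolding A_def B_def
    by (metis append_take_drop_id distinct_append inf_commute)
  have BA: "f b \<le> f a" if bB: "b \<in> B" and aA: "a \<in> A" for a b
  proof -
    obtain i where i: "i < length (take (n-p) ys)" "b = take (n-p) ys ! i"
      using bB unfolding B_def in_set_conv_nth by blast
    obtain j where j: "j < length (drop (n-p) ys)" "a = drop (n-p) ys ! j"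
      using aA unfolding A_def in_set_conv_nth by blast
    have "f b = map f ys ! i" "f a = map f ys ! (n - p + j)" using i j len by auto
    moreover have "i \<le> n - p + j" "n - p + j < length (map f ys)" using i j len by auto
    moreover have "map f ys ! i \<le> map f ys ! (n - p + j)"
      using calculation(3,4) by (intro sorted_nth_mono[OF srt])
    ultimately show ?thesis by simp
  qed
  have part2: "sum f S \<le> T" if S: "S \<subseteq> X" "card S = p" for S
  proof -
    have fin: "finite A" "finite B" "finite S" using X S AX ABX by (auto intro: finite_subset)
    have SU: "S = (S \<inter> A) \<union> (S \<inter> B)" using S ABX by blast
    have SD: "(S \<inter> A) \<inter> (S \<inter> B) = {}" using ABd by blast
    have s1: "sum f S = sum f (S \<inter> A) + sum f (S \<inter> B)"
      using fin SD by (subst SU) (rule sum.union_disjoint, auto)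
    have s2: "sum f A = sum f (S \<inter> A) + sum f (A - S)"
      using fin by (metis Int_commute sum.Int_Diff)
    have cc: "card (S \<inter> B) = card (A - S)"
    proof -
      have "card S = card (S \<inter> A) + card (S \<inter> B)"
        using fin SD by (subst SU) (rule card_Un_disjoint, auto)
      moreover have "card A = card (S \<inter> A) + card (A - S)"
        using fin by (metis Int_commute card_Int_Diff)
      ultimately show ?thesis using cA S by simp
    qed
    have "sum f (S \<inter> B) \<le> sum f (A - S)"
    proof (cases "A - S = {}")
      case True
      then have "card (S \<inter> B) = 0" using cc by (simp only: True card.empty)
      then have "S \<inter> B = {}" using fin by simp
      then show ?thesis by (simp only: True sum.empty order.refl)
    next
      case False
      define m where "m = Min (f ` (A - S))"
      have "sum f (S \<inter> B) \<le> sum (\<lambda>_. m) (S \<inter> B)"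
      proof (rule sum_mono)
        fix b assume b: "b \<in> S \<inter> B"
        have "m \<in> f ` (A - S)" unfolding m_def using False fin by (intro Min_in) auto
        then obtain a where "a \<in> A - S" "f a = m" by blast
        then show "f b \<le> m" using BA b by auto
      qed
      also have "\<dots> = sum (\<lambda>_. m) (A - S)" using cc by simp
      also have "\<dots> \<le> sum f (A - S)"
        by (rule sum_mono) (use fin in \<open>auto simp: m_def\<close>)
      finally show ?thesis .
    qed
    moreover have "T = sum f A" using Teq by (simp only: A_def)
    ultimately show ?thesis using s1 s2 by linarith
  qed
  have TA: "T = sum f A" using Teq by (simp only: A_def)
  show ?thesis using AX cA TA part2 by blast
qed


lemma edist_L2: "edist d x y = L2_set (\<lambda>i. x i - y i) {..<d}"
  by (simp add: edist_def L2_set_def)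

lemma edist_tri: "edist d x z \<le> edist d x y + edist d y z"
proof -
  have "edist d x z = L2_set (\<lambda>i. (x i - y i) + (y i - z i)) {..<d}"
    by (simp add: edist_L2)
  also have "\<dots> \<le> edist d x y + edist d y z"
    unfolding edist_L2 by (rule L2_set_triangle_ineq)
  finally show ?thesis .
qed

lemma edist_sym: "edist d x y = edist d y x"
  unfolding edist_def by (simp add: power2_commute)

lemma setdist_lip:
  assumes "finite C'" "C' \<noteq> {}"
  shows "setdist d x C' \<le> setdist d y C' + edist d x y"
proof -
  have "setdist d y C' \<in> edist d y ` C'" unfolding setdist_def using assms by (intro Min_in) auto
  then obtain c where c: "c \<in> C'" "setdist d y C' = edist d y c" by blast
  have "setdist d x C' \<le> edist d x c" unfolding setdist_def using assms c by (intro Min_le) auto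
  also have "\<dots> \<le> edist d x y + edist d y c" by (rule edist_tri)
  finally show ?thesis using c by simp
qed

lemma quad_expand:
  fixes w v :: "nat \<Rightarrow> real"
  shows "(\<Sum>i<d. (w i - s * v i)^2) = (\<Sum>i<d. (w i)^2) - 2 * s * (\<Sum>i<d. w i * v i) + s^2 * (\<Sum>i<d. (v i)^2)"
proof -
  have "(\<Sum>i<d. (w i - s * v i)^2) = (\<Sum>i<d. (w i)^2 - 2 * s * (w i * v i) + s^2 * (v i)^2)"
    by (rule sum.cong) (auto simp: power2_eq_square algebra_simps)
  also have "\<dots> = (\<Sum>i<d. (w i)^2) - 2 * s * (\<Sum>i<d. w i * v i) + s^2 * (\<Sum>i<d. (v i)^2)"
    by (simp add: sum.distrib sum_subtractf sum_distrib_left)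
  finally show ?thesis .
qed

lemma proj_min:
  assumes V: "(\<Sum>i<d. (u i - c i)^2) \<noteq> 0"
  shows "edist d x (proj_line d (c,u) x) \<le> edist d x (\<lambda>i. c i + s * (u i - c i))"
proof -
  define w where "w i = x i - c i" for i
  define v where "v i = u i - c i" for i
  define W where "W = (\<Sum>i<d. (w i)^2)"
  define P where "P = (\<Sum>i<d. w i * v i)"
  define VV where "VV = (\<Sum>i<d. (v i)^2)"
  define t where "t = P / VV"
  have VV0: "VV \<noteq> 0" using V by (simp add: VV_def v_def)
  have VVp: "VV \<ge> 0" unfolding VV_def by (simp add: sum_nonneg)
  have pr: "proj_line d (c,u) x = (\<lambda>i. c i + t * (u i - c i))"
    by (simp add: proj_line_def t_def P_def VV_def w_def v_def Let_def)
  have F: "(\<Sum>i<d. (x i - (c i + r * (u i - c i)))^2) = W - 2 * r * P + r^2 * VV" for r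
  proof -
    have "(\<Sum>i<d. (x i - (c i + r * (u i - c i)))^2) = (\<Sum>i<d. (w i - r * v i)^2)"
      by (simp add: w_def v_def algebra_simps)
    then show ?thesis using quad_expand[of w r v d] by (simp add: W_def P_def VV_def)
  qed
  have "W - 2 * t * P + t^2 * VV \<le> W - 2 * s * P + s^2 * VV"
  proof -
    have "(W - 2 * s * P + s^2 * VV) - (W - 2 * t * P + t^2 * VV) = VV * (s - t)^2"
      using VV0 by (simp add: t_def field_simps power2_eq_square)
    moreover have "VV * (s - t)^2 \<ge> 0" using VVp by simp
    ultimately show ?thesis by linarith
  qed
  then show ?thesis unfolding edist_def pr using F by (simp add: real_sqrt_le_mono)
qed

lemma edist_nonneg: "edist d x y \<ge> 0"
  by (simp add: edist_def sum_nonneg)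

lemma sum_sq_zero:
  assumes "edist d x c = 0" "i < d"
  shows "x i = c i"
proof -
  have "(\<Sum>i<d. (x i - c i)^2) = 0" using assms(1) by (simp add: edist_def)
  then have "\<forall>i\<in>{..<d}. (x i - c i)^2 = 0" by (subst (asm) sum_nonneg_eq_0_iff) auto
  then show ?thesis using assms(2) by auto
qed

lemma edist_scale: "edist d (\<lambda>i. r * a i) (\<lambda>i. r * b i) = \<bar>r\<bar> * edist d a b"
proof -
  have "(\<Sum>i<d. (r * a i - r * b i)^2) = r^2 * (\<Sum>i<d. (a i - b i)^2)"
    by (simp add: sum_distrib_left power2_eq_square algebra_simps)
  then show ?thesis by (simp add: edist_def real_sqrt_mult)
qed

lemma sphere_point:
  assumes d: "0 < d" and x: "x \<in> Rd d" and c: "c \<in> Rd d"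
  shows "\<exists>y\<in>Rd d. edist d y c = 1 \<and> (\<forall>i<d. x i - c i = edist d x c * (y i - c i))"
proof (cases "edist d x c = 0")
  case True
  define y where "y = c(0 := c 0 + 1)"
  have "y \<in> Rd d" using c d by (auto simp: Rd_def y_def)
  moreover have "(\<Sum>i<d. (y i - c i)^2) = (\<Sum>i\<in>{0}. (y i - c i)^2)"
    by (rule sum.mono_neutral_right) (use d in \<open>auto simp: y_def\<close>)
  then have "edist d y c = 1" by (simp add: edist_def y_def)
  moreover have "\<forall>i<d. x i - c i = edist d x c * (y i - c i)"
    using True sum_sq_zero[OF True] by simp
  ultimately show ?thesis by blast
next
  case False
  define r where "r = edist d x c"
  have r: "r > 0" using False edist_nonneg[of d x c] by (simp add: r_def)
  define y where "y i = c i + (x i - c i) / r" for i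
  have "y \<in> Rd d" using c x by (auto simp: Rd_def y_def)
  moreover have "edist d y c = 1"
  proof -
    have "edist d y c = edist d (\<lambda>i. (1/r) * x i) (\<lambda>i. (1/r) * c i)"
      unfolding edist_def by (rule arg_cong[where f=sqrt], rule sum.cong) (auto simp: y_def power_divide diff_divide_distrib[symmetric])
    also have "\<dots> = 1" unfolding edist_scale using r by (simp add: r_def)
    finally show ?thesis .
  qed
  moreover have "\<forall>i<d. x i - c i = r * (y i - c i)" using r by (simp add: y_def)
  ultimately show ?thesis unfolding r_def by blast
qed

lemma key:
  assumes d: "0 < d" and x: "x \<in> Rd d" and c: "c \<in> Rd d" and eps: "0 < \<epsilon>"
    and net: "is_sphere_net d \<epsilon> c Nc"
  shows "\<exists>u\<in>Nc. line_dist d x (c,u) \<le> \<epsilon> * edist d x c"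
proof -
  obtain y where y: "y \<in> Rd d" "edist d y c = 1" "\<forall>i<d. x i - c i = edist d x c * (y i - c i)"
    using sphere_point[OF d x c] by blast
  obtain u where u: "u \<in> Nc" "edist d y u \<le> \<epsilon>" using net y unfolding is_sphere_net_def by blast
  have "edist d u c = 1" using net u unfolding is_sphere_net_def by auto
  then have V: "(\<Sum>i<d. (u i - c i)^2) \<noteq> 0" by (auto simp: edist_def)
  define r where "r = edist d x c"
  have r: "r \<ge> 0" by (simp add: r_def edist_nonneg)
  have "line_dist d x (c,u) \<le> edist d x (\<lambda>i. c i + r * (u i - c i))"
    unfolding line_dist_def by (rule proj_min[OF V])
  also have "\<dots> = edist d (\<lambda>i. r * y i) (\<lambda>i. r * u i)"
    unfolding edist_def using y(3) by (intro arg_cong[where f=sqrt] sum.cong) (auto simp: r_def algebra_simps)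
  also have "\<dots> = r * edist d y u" using r by (simp add: edist_scale)
  also have "\<dots> \<le> r * \<epsilon>" using r u by (simp add: mult_left_mono)
  finally show ?thesis using u by (auto simp: r_def mult.commute)
qed

lemma costp_img:
  "costp d p (image_mset G M) C' = sum_list (take p (rev (sorted_list_of_multiset (image_mset (\<lambda>x. setdist d (G x) C') M))))"
  by (simp add: costp_def image_mset.compositionality comp_def)

lemma topp_compare:
  fixes f g h :: "'a \<Rightarrow> real"
  assumes X: "finite X" and p: "p \<le> card X" and e: "e \<ge> 0"
    and le: "\<And>x. x \<in> X \<Longrightarrow> g x \<le> f x + e * h x"
  shows "sum_list (take p (rev (sorted_list_of_multiset (image_mset g (mset_set X)))))
      \<le> sum_list (take p (rev (sorted_list_of_multiset (image_mset f (mset_set X)))))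
        + e * sum_list (take p (rev (sorted_list_of_multiset (image_mset h (mset_set X)))))"
proof -
  obtain S where S: "S \<subseteq> X" "card S = p"
    "sum_list (take p (rev (sorted_list_of_multiset (image_mset g (mset_set X))))) = sum g S"
    using topp_char[OF X p, of g] by blast
  have "sum g S \<le> sum (\<lambda>x. f x + e * h x) S" using S le by (intro sum_mono) auto
  also have "\<dots> = sum f S + e * sum h S" by (simp add: sum.distrib sum_distrib_left)
  also have "\<dots> \<le> sum_list (take p (rev (sorted_list_of_multiset (image_mset f (mset_set X)))))
        + e * sum_list (take p (rev (sorted_list_of_multiset (image_mset h (mset_set X)))))"
    using topp_char[OF X p, of f] topp_char[OF X p, of h] S e
    by (intro add_mono mult_left_mono) auto
  finally show ?thesis using S by simp
qed

theorem lemma4p5: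
  shows "\<exists>\<beta>::real. \<beta> > 0 \<and>
    (\<forall>(d::nat) (X::pt set) (\<epsilon>::real) (C::pt set) (N::pt \<Rightarrow> pt set)
       (L::(pt \<times> pt) set) (nl::pt \<Rightarrow> pt \<times> pt).
      finite X \<and> X \<subseteq> Rd d \<and> 0 < \<epsilon> \<and> \<epsilon> < 1 \<and>
      finite C \<and> C \<noteq> {} \<and> C \<subseteq> Rd d \<and>
      (\<forall>c\<in>C. is_sphere_net d \<epsilon> c (N c)) \<and>
      L = {(c, u). c \<in> C \<and> u \<in> N c} \<and>
      (\<forall>x\<in>X. nl x \<in> L \<and> (\<forall>l\<in>L. line_dist d x (nl x) \<le> line_dist d x l))
      \<longrightarrow>
      (\<forall>C' p. finite C' \<and> C' \<noteq> {} \<and> C' \<subseteq> Rd d \<and> 1 \<le> p \<and> p \<le> card X \<longrightarrow>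
         \<bar>costp d p (image_mset (\<lambda>x. proj_line d (nl x) x) (mset_set X)) C'
            - costp d p (mset_set X) C'\<bar>
         \<le> \<beta> * \<epsilon> * costp d p (mset_set X) C))"
proof (intro exI[of _ 1] conjI allI impI)
  show "(0::real) < 1" by simp
  fix d X \<epsilon> C N L nl C' p
  assume H: "finite X \<and> X \<subseteq> Rd d \<and> 0 < \<epsilon> \<and> \<epsilon> < 1 \<and>
      finite C \<and> C \<noteq> {} \<and> C \<subseteq> Rd d \<and>
      (\<forall>c\<in>C. is_sphere_net d \<epsilon> c (N c)) \<and>
      L = {(c, u). c \<in> C \<and> u \<in> N c} \<and>
      (\<forall>x\<in>X. nl x \<in> L \<and> (\<forall>l\<in>L. line_dist d x (nl x) \<le> line_dist d x l))"
    and H2: "finite C' \<and> C' \<noteq> {} \<and> C' \<subseteq> Rd d \<and> 1 \<le> p \<and> p \<le> card X"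
  have X: "finite X" and XR: "X \<subseteq> Rd d" and e: "0 < \<epsilon>" and C: "finite C" "C \<noteq> {}" "C \<subseteq> Rd d"
    and net: "\<forall>c\<in>C. is_sphere_net d \<epsilon> c (N c)" and L: "L = {(c, u). c \<in> C \<and> u \<in> N c}"
    and nl: "\<forall>x\<in>X. nl x \<in> L \<and> (\<forall>l\<in>L. line_dist d x (nl x) \<le> line_dist d x l)"
    using H by auto
  have C': "finite C'" "C' \<noteq> {}" and p: "p \<le> card X" using H2 by auto
  define pr where "pr x = proj_line d (nl x) x" for x
  define f where "f x = setdist d x C'" for x
  define g where "g x = setdist d (pr x) C'" for x
  define h where "h x = setdist d x C" for x
  have close: "edist d x (pr x) \<le> \<epsilon> * h x" if x: "x \<in> X" for x
  proof -
    obtain c0 u0 where cu: "nl x = (c0, u0)" "c0 \<in> C" "u0 \<in> N c0" using nl x L by auto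
    have "edist d u0 c0 = 1" using net cu unfolding is_sphere_net_def by auto
    then have d: "0 < d" by (cases d) (auto simp: edist_def)
    have "h x \<in> edist d x ` C" unfolding h_def setdist_def using C by (intro Min_in) auto
    then obtain c where c: "c \<in> C" "h x = edist d x c" by blast
    obtain u where u: "u \<in> N c" "line_dist d x (c,u) \<le> \<epsilon> * edist d x c"
      using key[OF d _ _ e, of x c "N c"] x XR c C net by auto
    have "(c,u) \<in> L" using L c u by auto
    then have "line_dist d x (nl x) \<le> line_dist d x (c,u)" using nl x by auto
    then show ?thesis using u c by (simp add: pr_def line_dist_def)
  qed
  have gf: "g x \<le> f x + \<epsilon> * h x" if "x \<in> X" for x
    using setdist_lip[OF C', of d "pr x" x] close[OF that] edist_sym[of d x "pr x"]
    by (simp add: f_def g_def)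
  have fg: "f x \<le> g x + \<epsilon> * h x" if "x \<in> X" for x
    using setdist_lip[OF C', of d x "pr x"] close[OF that]
    by (simp add: f_def g_def)
  have eq1: "costp d p (image_mset (\<lambda>x. proj_line d (nl x) x) (mset_set X)) C'
     = sum_list (take p (rev (sorted_list_of_multiset (image_mset g (mset_set X)))))"
  proof -
    have "g = (\<lambda>x. setdist d (proj_line d (nl x) x) C')" by (simp add: fun_eq_iff g_def pr_def)
    then show ?thesis unfolding costp_img by simp
  qed
  have eq2: "costp d p (mset_set X) C'
     = sum_list (take p (rev (sorted_list_of_multiset (image_mset f (mset_set X)))))"
    unfolding costp_def f_def[abs_def] by simp
  have eq3: "costp d p (mset_set X) C
     = sum_list (take p (rev (sorted_list_of_multiset (image_mset h (mset_set X)))))"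
    unfolding costp_def h_def[abs_def] by simp
  show "\<bar>costp d p (image_mset (\<lambda>x. proj_line d (nl x) x) (mset_set X)) C'
            - costp d p (mset_set X) C'\<bar>
         \<le> 1 * \<epsilon> * costp d p (mset_set X) C"
    unfolding eq1 eq2 eq3
    using topp_compare[OF X p, of \<epsilon> g f h] topp_compare[OF X p, of \<epsilon> f g h] gf fg e
    by (simp add: abs_le_iff)
qed

end
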